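(* Let $\mathbb{G}$ be a subclass of anterial graphs on $V$ that contains all DAGs on $V$, and let $\mathcal{M}$ be Pearl-minimality relative to $\mathbb{G}$. For a distribution $P$ on $V$, $U_{\mathcal{M}}(P)=\top$ if and only if $P$ is graphical, i.e. there exists $G\in\mathbb{G}$ such that $P$ is faithful to $G$.
   Context: Anterial graphs are graphs with directed, undirected and bidirected edges such that there is no path from $i_0$ to $i_n$ with $i_0\leftrightarrow i_n$ whose edges are all undirected or directed forward ($i_m\to i_{m+1}$), and no cycle whose edges are all undirected or directed forward; they carry a standard separation criterion (d-separation for DAGs). $J(G)$ is the set of separation triples of $G$, $J(P)$ the set of conditional independence triples of $P$; graphs are Markov equivalent if their $J$'s coincide. $P$ is faithful to $G$ if $J(G)=J(P)$. $\mathcal{M}(P,G)=\top$ ($P$ Pearl-minimal to $G\in\mathbb{G}$) iff there is no $G'\in\mathbb{G}$ with $J(G)\subsetneq J(G')\subseteq J(P)$. $U_{\mathcal{M}}(P)=\top$ means all $G\in\mathbb{G}$ with $\mathcal{M}(P,G)=\top$ are pairwise Markov equivalent. *)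

theory Defs
  imports "HOL-Probability.Probability"
begin

text \<open>A mixed graph has directed edges (pairs (i,j) meaning i \<rightarrow> j),
undirected edges (lines, symmetric) and bidirected edges (arcs, symmetric).\<close>

record 'v mgraph =
  dir :: "('v \<times> 'v) set"
  und :: "('v \<times> 'v) set"
  bid :: "('v \<times> 'v) set"

definition mixed_graph :: "'v set \<Rightarrow> 'v mgraph \<Rightarrow> bool" where
  "mixed_graph V G \<longleftrightarrow>
     dir G \<subseteq> V \<times> V \<and> und G \<subseteq> V \<times> V \<and> bid G \<subseteq> V \<times> V \<and>
     (\<forall>i. (i,i) \<notin> dir G \<and> (i,i) \<notin> und G \<and> (i,i) \<notin> bid G) \<and>
     sym (und G) \<and> sym (bid G)"

datatype etype = Fwd | Bwd | Lin | Arc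

fun step :: "'v mgraph \<Rightarrow> etype \<Rightarrow> 'v \<Rightarrow> 'v \<Rightarrow> bool" where
  "step G Fwd i j = ((i,j) \<in> dir G)"
| "step G Bwd i j = ((j,i) \<in> dir G)"
| "step G Lin i j = ((i,j) \<in> und G)"
| "step G Arc i j = ((i,j) \<in> bid G)"

definition walk :: "'v mgraph \<Rightarrow> 'v list \<Rightarrow> etype list \<Rightarrow> bool" where
  "walk G vs es \<longleftrightarrow> length vs = Suc (length es) \<and>
     (\<forall>k < length es. step G (es ! k) (vs ! k) (vs ! Suc k))"

definition anterial_path :: "'v mgraph \<Rightarrow> 'v list \<Rightarrow> etype list \<Rightarrow> bool" where
  "anterial_path G vs es \<longleftrightarrow> walk G vs es \<and> es \<noteq> [] \<and> distinct vs \<and>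
     set es \<subseteq> {Lin, Fwd}"

definition semidirected_cycle :: "'v mgraph \<Rightarrow> 'v list \<Rightarrow> etype list \<Rightarrow> bool" where
  "semidirected_cycle G vs es \<longleftrightarrow> walk G vs es \<and> es \<noteq> [] \<and> hd vs = last vs \<and>
     distinct (tl vs) \<and> set es \<subseteq> {Lin, Fwd} \<and> Fwd \<in> set es"

definition anterial :: "'v set \<Rightarrow> 'v mgraph \<Rightarrow> bool" where
  "anterial V G \<longleftrightarrow> mixed_graph V G \<and>
     (\<forall>i j. (i,j) \<in> bid G \<longrightarrow>
        \<not> (\<exists>vs es. anterial_path G vs es \<and> hd vs = i \<and> last vs = j)) \<and>
     \<not> (\<exists>vs es. semidirected_cycle G vs es)"

definition DAG :: "'v set \<Rightarrow> 'v mgraph \<Rightarrow> bool" where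
  "DAG V G \<longleftrightarrow> mixed_graph V G \<and> und G = {} \<and> bid G = {} \<and> acyclic (dir G)"

definition head_at_end :: "etype \<Rightarrow> bool" where
  "head_at_end e \<longleftrightarrow> e = Fwd \<or> e = Arc"
definition head_at_start :: "etype \<Rightarrow> bool" where
  "head_at_start e \<longleftrightarrow> e = Bwd \<or> e = Arc"

definition "section" :: "etype list \<Rightarrow> nat \<Rightarrow> nat \<Rightarrow> bool" where
  "section es p q \<longleftrightarrow> p \<le> q \<and> q \<le> length es \<and>
     (\<forall>k. p \<le> k \<and> k < q \<longrightarrow> es ! k = Lin) \<and>
     (0 < p \<longrightarrow> es ! (p - 1) \<noteq> Lin) \<and>
     (q < length es \<longrightarrow> es ! q \<noteq> Lin)"

definition collider_section :: "etype list \<Rightarrow> nat \<Rightarrow> nat \<Rightarrow> bool" where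
  "collider_section es p q \<longleftrightarrow> section es p q \<and> 0 < p \<and> q < length es \<and>
     head_at_end (es ! (p - 1)) \<and> head_at_start (es ! q)"

definition m_connecting :: "'v mgraph \<Rightarrow> 'v set \<Rightarrow> 'v list \<Rightarrow> etype list \<Rightarrow> bool" where
  "m_connecting G C vs es \<longleftrightarrow> walk G vs es \<and>
     (\<forall>p q. section es p q \<longrightarrow>
        (if collider_section es p q then (\<exists>k\<in>{p..q}. vs ! k \<in> C)
         else (\<forall>k\<in>{p..q}. vs ! k \<notin> C)))"

definition separated :: "'v mgraph \<Rightarrow> 'v set \<Rightarrow> 'v set \<Rightarrow> 'v set \<Rightarrow> bool" where
  "separated G A B C \<longleftrightarrow>
     \<not> (\<exists>vs es. m_connecting G C vs es \<and> hd vs \<in> A \<and> last vs \<in> B)"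

definition triples :: "'v set \<Rightarrow> ('v set \<times> 'v set \<times> 'v set) set" where
  "triples V = {(A,B,C). A \<subseteq> V \<and> B \<subseteq> V \<and> C \<subseteq> V \<and>
       A \<inter> B = {} \<and> A \<inter> C = {} \<and> B \<inter> C = {}}"

definition J_graph :: "'v set \<Rightarrow> 'v mgraph \<Rightarrow> ('v set \<times> 'v set \<times> 'v set) set" where
  "J_graph V G = {(A,B,C) \<in> triples V. separated G A B C}"

definition var_algebra :: "('v \<Rightarrow> 'b) measure \<Rightarrow> ('v \<Rightarrow> 'b measure) \<Rightarrow> 'v set \<Rightarrow> ('v \<Rightarrow> 'b) measure" where
  "var_algebra P M S = vimage_algebra (space P) (\<lambda>x. restrict x S) (PiM S M)"

definition cond_indep ::
  "('v \<Rightarrow> 'b) measure \<Rightarrow> ('v \<Rightarrow> 'b measure) \<Rightarrow> 'v set \<Rightarrow> 'v set \<Rightarrow> 'v set \<Rightarrow> bool" where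
  "cond_indep P M A B C \<longleftrightarrow>
     (\<forall>EA \<in> sets (var_algebra P M A). \<forall>EB \<in> sets (var_algebra P M B).
        AE x in P. real_cond_exp P (var_algebra P M C) (indicator (EA \<inter> EB)) x =
                   real_cond_exp P (var_algebra P M C) (indicator EA) x *
                   real_cond_exp P (var_algebra P M C) (indicator EB) x)"

definition distribution_on :: "'v set \<Rightarrow> ('v \<Rightarrow> 'b measure) \<Rightarrow> ('v \<Rightarrow> 'b) measure \<Rightarrow> bool" where
  "distribution_on V M P \<longleftrightarrow> prob_space P \<and> sets P = sets (PiM V M)"

definition J_dist :: "'v set \<Rightarrow> ('v \<Rightarrow> 'b measure) \<Rightarrow> ('v \<Rightarrow> 'b) measure \<Rightarrow> ('v set \<times> 'v set \<times> 'v set) set" where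
  "J_dist V M P = {(A,B,C) \<in> triples V. cond_indep P M A B C}"

definition faithful :: "'v set \<Rightarrow> ('v \<Rightarrow> 'b measure) \<Rightarrow> ('v \<Rightarrow> 'b) measure \<Rightarrow> 'v mgraph \<Rightarrow> bool" where
  "faithful V M P G \<longleftrightarrow> J_graph V G = J_dist V M P"

definition markov_equivalent :: "'v set \<Rightarrow> 'v mgraph \<Rightarrow> 'v mgraph \<Rightarrow> bool" where
  "markov_equivalent V G G' \<longleftrightarrow> J_graph V G = J_graph V G'"

definition pearl_minimal ::
  "'v set \<Rightarrow> 'v mgraph set \<Rightarrow> ('v \<Rightarrow> 'b measure) \<Rightarrow> ('v \<Rightarrow> 'b) measure \<Rightarrow> 'v mgraph \<Rightarrow> bool" where
  "pearl_minimal V GG M P G \<longleftrightarrow> G \<in> GG \<and> J_graph V G \<subseteq> J_dist V M P \<and>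
     \<not> (\<exists>G' \<in> GG. J_graph V G \<subset> J_graph V G' \<and> J_graph V G' \<subseteq> J_dist V M P)"

definition unique_pearl_minimal ::
  "'v set \<Rightarrow> 'v mgraph set \<Rightarrow> ('v \<Rightarrow> 'b measure) \<Rightarrow> ('v \<Rightarrow> 'b) measure \<Rightarrow> bool" where
  "unique_pearl_minimal V GG M P \<longleftrightarrow>
     (\<forall>G \<in> GG. \<forall>G' \<in> GG. pearl_minimal V GG M P G \<and> pearl_minimal V GG M P G'
        \<longrightarrow> markov_equivalent V G G')"

end

theory Submission
  imports Defs
begin


lemma sfs: "prob_space P \<Longrightarrow> subalgebra P F \<Longrightarrow> sigma_finite_subalgebra P F"
  by (rule finite_measure_subalgebra_is_sigma_finite)
     (simp add: finite_measure_subalgebra_def finite_measure_subalgebra_axioms_def prob_space.finite_measure prob_space_def)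

lemma set_integral_eq_sigma:
  fixes f g :: "'a \<Rightarrow> real"
  assumes f: "integrable M f" and g: "integrable M g" and st: "Int_stable G"
    and GM: "G \<subseteq> sets M" and top: "space M \<in> G"
    and base: "\<And>A. A \<in> G \<Longrightarrow> (\<integral>x\<in>A. f x \<partial>M) = (\<integral>x\<in>A. g x \<partial>M)"
    and A: "A \<in> sigma_sets (space M) G"
  shows "(\<integral>x\<in>A. f x \<partial>M) = (\<integral>x\<in>A. g x \<partial>M)"
proof -
  have sub: "sigma_sets (space M) G \<subseteq> sets M" using GM by (rule sets.sigma_sets_subset)
  have GP: "G \<subseteq> Pow (space M)" using GM sets.sets_into_space by blast
  have si: "\<And>A h. A \<in> sets M \<Longrightarrow> integrable M h \<Longrightarrow> set_integrable M A (h::'a\<Rightarrow>real)"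
    unfolding set_integrable_def using integrable_mult_indicator by (metis (no_types) integrable_mult_indicator real_scaleR_def)
  from st GP A show ?thesis
  proof (induction rule: sigma_sets_induct_disjoint)
    case (basic A) then show ?case by (rule base)
  next
    case empty then show ?case by (simp add: set_lebesgue_integral_def)
  next
    case (compl A)
    have As: "A \<in> sets M" using compl sub by blast
    have Cs: "space M - A \<in> sets M" using As by auto
    have U: "A \<union> (space M - A) = space M" using As sets.sets_into_space by blast
    have "(\<integral>x\<in>space M. f x \<partial>M) = (\<integral>x\<in>A. f x \<partial>M) + (\<integral>x\<in>space M - A. f x \<partial>M)"
      by (subst U[symmetric], rule set_integral_Un) (auto intro!: si As Cs f)
    moreover have "(\<integral>x\<in>space M. g x \<partial>M) = (\<integral>x\<in>A. g x \<partial>M) + (\<integral>x\<in>space M - A. g x \<partial>M)"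
      by (subst U[symmetric], rule set_integral_Un) (auto intro!: si As Cs g)
    moreover have "(\<integral>x\<in>space M. f x \<partial>M) = (\<integral>x\<in>space M. g x \<partial>M)" using base top by blast
    ultimately show ?case using compl by linarith
  next
    case (union A)
    have As: "\<And>i. A i \<in> sets M" using union sub by blast
    have d: "\<And>i j. i \<noteq> j \<Longrightarrow> A i \<inter> A j = {}" using union(1) by (auto simp: disjoint_family_on_def)
    have Us: "(\<Union>i. A i) \<in> sets M" using As by auto
    have "(\<integral>x\<in>(\<Union>i. A i). f x \<partial>M) = (\<Sum>i. (\<integral>x\<in>A i. f x \<partial>M))"
      by (rule lebesgue_integral_countable_add[OF As d si[OF Us f]])
    also have "\<dots> = (\<Sum>i. (\<integral>x\<in>A i. g x \<partial>M))" using union by simp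
    also have "\<dots> = (\<integral>x\<in>(\<Union>i. A i). g x \<partial>M)"
      by (rule lebesgue_integral_countable_add[OF As d si[OF Us g], symmetric])
    finally show ?case .
  qed
qed



definition ci :: "'a measure \<Rightarrow> 'a measure \<Rightarrow> 'a measure \<Rightarrow> 'a measure \<Rightarrow> bool" where
  "ci P FA FB FC \<longleftrightarrow> (\<forall>EA\<in>sets FA. \<forall>EB\<in>sets FB.
     AE x in P. real_cond_exp P FC (indicator (EA \<inter> EB)) x =
        real_cond_exp P FC (indicator EA) x * real_cond_exp P FC (indicator EB) x)"

lemma subalg_sets: "subalgebra P F \<Longrightarrow> E \<in> sets F \<Longrightarrow> E \<in> sets P"
  by (auto simp: subalgebra_def)

lemma ind_int: "prob_space P \<Longrightarrow> E \<in> sets P \<Longrightarrow> integrable P (indicator E :: _ \<Rightarrow> real)"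
  by (rule integrable_real_indicator) (simp_all add: finite_measure.emeasure_finite prob_space_def less_top[symmetric])

lemma subalg_sub: "subalgebra P G \<Longrightarrow> subalgebra P F \<Longrightarrow> sets F \<subseteq> sets G \<Longrightarrow> subalgebra G F"
  by (auto simp: subalgebra_def)

lemma ci_of_ce:
  assumes P: "prob_space P" and sA: "subalgebra P FA" and sB: "subalgebra P FB"
    and sC: "subalgebra P FC" and sBC: "subalgebra P FBC"
    and BBC: "sets FB \<subseteq> sets FBC" and CBC: "sets FC \<subseteq> sets FBC"
    and h: "\<forall>EA\<in>sets FA. AE x in P. real_cond_exp P FBC (indicator EA) x = real_cond_exp P FC (indicator EA) x"
  shows "ci P FA FB FC"
  unfolding ci_def
proof (intro ballI)
  fix EA EB assume EA: "EA \<in> sets FA" and EB: "EB \<in> sets FB"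
  interpret C: sigma_finite_subalgebra P FC by (rule sfs[OF P sC])
  interpret BC: sigma_finite_subalgebra P FBC by (rule sfs[OF P sBC])
  have EAs[measurable]: "EA \<in> sets P" using subalg_sets[OF sA EA] .
  have EBs[measurable]: "EB \<in> sets P" using subalg_sets[OF sB EB] .
  have EBbc: "EB \<in> sets FBC" using EB BBC by blast
  define a :: "_ \<Rightarrow> real" where "a = indicator EA"
  define b :: "_ \<Rightarrow> real" where "b = indicator EB"
  have am[measurable]: "a \<in> borel_measurable P" unfolding a_def by measurable
  have bm[measurable]: "b \<in> borel_measurable P" unfolding b_def by measurable
  have bmBC: "b \<in> borel_measurable FBC" unfolding b_def using EBbc by simp
  have ia: "integrable P a" unfolding a_def by (rule ind_int[OF P EAs])
  have iba: "integrable P (\<lambda>x. b x * a x)"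
    unfolding b_def using integrable_mult_indicator[OF EBs ia] by simp
  have eq: "indicator (EA \<inter> EB) = (\<lambda>x. b x * a x)"
    unfolding a_def b_def by (auto simp: indicator_def)
  have 1: "AE x in P. real_cond_exp P FC (real_cond_exp P FBC (\<lambda>x. b x * a x)) x = real_cond_exp P FC (\<lambda>x. b x * a x) x"
    by (rule C.real_cond_exp_nested_subalg[OF sBC subalg_sub[OF sBC sC CBC] iba])
  have 2: "AE x in P. real_cond_exp P FBC (\<lambda>x. b x * a x) x = b x * real_cond_exp P FBC a x"
    by (rule BC.real_cond_exp_mult[OF bmBC am iba])
  have 3: "AE x in P. real_cond_exp P FBC a x = real_cond_exp P FC a x"
    using h EA unfolding a_def by blast
  have 4: "AE x in P. real_cond_exp P FC (real_cond_exp P FBC (\<lambda>x. b x * a x)) x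
     = real_cond_exp P FC (\<lambda>x. real_cond_exp P FC a x * b x) x"
    by (rule C.real_cond_exp_cong) (use 2 3 in \<open>auto simp: mult.commute\<close>)
  have ica: "integrable P (\<lambda>x. real_cond_exp P FC a x * b x)"
    unfolding b_def using integrable_mult_indicator[OF EBs C.real_cond_exp_int(1)[OF ia]] by (simp add: mult.commute)
  have 5: "AE x in P. real_cond_exp P FC (\<lambda>x. real_cond_exp P FC a x * b x) x = real_cond_exp P FC a x * real_cond_exp P FC b x"
    by (rule C.real_cond_exp_mult) (auto simp: ica)
  show "AE x in P. real_cond_exp P FC (indicator (EA \<inter> EB)) x =
        real_cond_exp P FC (indicator EA) x * real_cond_exp P FC (indicator EB) x"
    using 1 4 5 unfolding eq a_def[symmetric] b_def[symmetric] by eventually_elim simp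
qed



lemma ce_of_ci:
  assumes P: "prob_space P" and sA: "subalgebra P FA" and sB: "subalgebra P FB"
    and sC: "subalgebra P FC" and sBC: "subalgebra P FBC"
    and CBC: "sets FC \<subseteq> sets FBC"
    and gen: "sets FBC \<subseteq> sigma_sets (space P) {EB \<inter> EC | EB EC. EB \<in> sets FB \<and> EC \<in> sets FC}"
    and c: "ci P FA FB FC" and EA: "EA \<in> sets FA"
  shows "AE x in P. real_cond_exp P FBC (indicator EA) x = real_cond_exp P FC (indicator EA) x"
proof -
  interpret C: sigma_finite_subalgebra P FC by (rule sfs[OF P sC])
  interpret BC: sigma_finite_subalgebra P FBC by (rule sfs[OF P sBC])
  have EAs[measurable]: "EA \<in> sets P" using subalg_sets[OF sA EA] .
  define a :: "_ \<Rightarrow> real" where "a = indicator EA"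
  have am[measurable]: "a \<in> borel_measurable P" unfolding a_def by measurable
  have ia: "integrable P a" unfolding a_def by (rule ind_int[OF P EAs])
  define g where "g = real_cond_exp P FC a"
  have ig: "integrable P g" unfolding g_def by (rule C.real_cond_exp_int(1)[OF ia])
  have gm[measurable]: "g \<in> borel_measurable P" unfolding g_def by measurable
  have gF: "g \<in> borel_measurable FBC"
    unfolding g_def by (rule measurable_from_subalg[OF subalg_sub[OF sBC sC CBC]]) simp
  let ?G = "{EB \<inter> EC | EB EC. EB \<in> sets FB \<and> EC \<in> sets FC}"
  have spB: "space FB = space P" and spC: "space FC = space P" using sB sC by (auto simp: subalgebra_def)
  have GP: "?G \<subseteq> sets P" using subalg_sets[OF sB] subalg_sets[OF sC] by blast
  have st: "Int_stable ?G"
    unfolding Int_stable_def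
  proof (intro ballI)
    fix X Y assume "X \<in> ?G" "Y \<in> ?G"
    then obtain EB EC EB' EC' where "X = EB \<inter> EC" "Y = EB' \<inter> EC'" "EB \<in> sets FB" "EC \<in> sets FC"
      "EB' \<in> sets FB" "EC' \<in> sets FC" by blast
    then show "X \<inter> Y \<in> ?G" by (intro CollectI exI[of _ "EB \<inter> EB'"] exI[of _ "EC \<inter> EC'"]) auto
  qed
  have top: "space P \<in> ?G"
    using sets.top[of FB] sets.top[of FC] spB spC by blast
  have base: "(\<integral>x\<in>X. a x \<partial>P) = (\<integral>x\<in>X. g x \<partial>P)" if X: "X \<in> ?G" for X
  proof -
    obtain EB EC where X: "X = EB \<inter> EC" and EB: "EB \<in> sets FB" and EC: "EC \<in> sets FC" using X by blast
    have EBs[measurable]: "EB \<in> sets P" using subalg_sets[OF sB EB] .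
    have ECs[measurable]: "EC \<in> sets P" using subalg_sets[OF sC EC] .
    define b :: "_ \<Rightarrow> real" where "b = indicator EB"
    have bm[measurable]: "b \<in> borel_measurable P" unfolding b_def by measurable
    have ecF: "(indicator EC :: _ \<Rightarrow> real) \<in> borel_measurable FC" using EC by simp
    have iab: "integrable P (indicator (EA \<inter> EB) :: _ \<Rightarrow> real)" by (rule ind_int[OF P]) simp
    have ica: "integrable P (\<lambda>x. g x * b x)"
      unfolding b_def using integrable_mult_indicator[OF EBs ig] by (simp add: mult.commute)
    have "(\<integral>x\<in>X. a x \<partial>P) = (\<integral>x. indicator EC x * indicator (EA \<inter> EB) x \<partial>P)"
      unfolding set_lebesgue_integral_def X a_def by (rule Bochner_Integration.integral_cong) (auto simp: indicator_def)
    also have "\<dots> = (\<integral>x. indicator EC x * real_cond_exp P FC (indicator (EA \<inter> EB)) x \<partial>P)"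
      by (rule C.real_cond_exp_intg(2)[symmetric]) (use integrable_mult_indicator[OF ECs iab] ecF in auto)
    also have "\<dots> = (\<integral>x. indicator EC x * (g x * real_cond_exp P FC b x) \<partial>P)"
    proof (rule integral_cong_AE)
      show "AE x in P. indicator EC x * real_cond_exp P FC (indicator (EA \<inter> EB)) x = indicator EC x * (g x * real_cond_exp P FC b x)"
      proof -
        have "AE x in P. real_cond_exp P FC (indicator (EA \<inter> EB)) x = g x * real_cond_exp P FC b x"
          using c EA EB unfolding ci_def g_def a_def b_def by blast
        then show ?thesis by eventually_elim simp
      qed
    qed (measurable, measurable)
    also have "\<dots> = (\<integral>x. indicator EC x * real_cond_exp P FC (\<lambda>x. g x * b x) x \<partial>P)"
    proof (rule integral_cong_AE)
      have "AE x in P. real_cond_exp P FC (\<lambda>x. g x * b x) x = g x * real_cond_exp P FC b x"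
        by (rule C.real_cond_exp_mult) (use ica in \<open>auto simp: g_def\<close>)
      then show "AE x in P. indicator EC x * (g x * real_cond_exp P FC b x) = indicator EC x * real_cond_exp P FC (\<lambda>x. g x * b x) x"
        by auto
    qed (measurable, measurable)
    also have "\<dots> = (\<integral>x. indicator EC x * (g x * b x) \<partial>P)"
      by (rule C.real_cond_exp_intg(2)) (use integrable_mult_indicator[OF ECs ica] ecF in auto)
    also have "\<dots> = (\<integral>x\<in>X. g x \<partial>P)"
      unfolding set_lebesgue_integral_def X b_def by (rule Bochner_Integration.integral_cong) (auto simp: indicator_def)
    finally show ?thesis .
  qed
  have "AE x in P. real_cond_exp P FBC a x = g x"
  proof (rule BC.real_cond_exp_charact)
    fix X assume "X \<in> sets FBC"
    then have "X \<in> sigma_sets (space P) ?G" using gen by blast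
    then show "(\<integral>x\<in>X. a x \<partial>P) = (\<integral>x\<in>X. g x \<partial>P)"
      using set_integral_eq_sigma[OF ia ig st GP top base] by blast
  qed (use ia ig gF in auto)
  then show ?thesis unfolding g_def a_def .
qed



lemma dist_space: "distribution_on V M P \<Longrightarrow> space P = space (PiM V M)"
  unfolding distribution_on_def by (metis sets_eq_imp_space_eq)

lemma restrict_in_space:
  assumes "distribution_on V M P" "S \<subseteq> V" "x \<in> space P"
  shows "restrict x S \<in> space (PiM S M)"
  using assms dist_space[OF assms(1)] by (auto simp: space_PiM PiE_def Pi_def)

lemma var_subalg:
  assumes d: "distribution_on V M P" and S: "S \<subseteq> V"
  shows "subalgebra P (var_algebra P M S)"
proof -
  have "(\<lambda>x. restrict x S) \<in> measurable P (PiM S M)"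
    using measurable_restrict_subset[OF S, of M] d
    by (simp add: distribution_on_def measurable_cong_sets[of P "PiM V M" "PiM S M" "PiM S M"])
  then have "sets (vimage_algebra (space P) (\<lambda>x. restrict x S) (PiM S M)) \<subseteq> sets P"
    by (intro sets_image_in_sets) simp_all
  then show ?thesis unfolding subalgebra_def var_algebra_def by simp
qed

lemma var_meas:
  assumes d: "distribution_on V M P" and S: "S \<subseteq> V"
  shows "(\<lambda>x. restrict x S) \<in> measurable (var_algebra P M S) (PiM S M)"
  unfolding var_algebra_def
  by (rule measurable_vimage_algebra1) (use restrict_in_space[OF d S] in blast)

lemma var_mono:
  assumes d: "distribution_on V M P" and ST: "S \<subseteq> T" and T: "T \<subseteq> V"
  shows "sets (var_algebra P M S) \<subseteq> sets (var_algebra P M T)"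
proof -
  have m: "(\<lambda>x. restrict (restrict x T) S) \<in> measurable (var_algebra P M T) (PiM S M)"
    by (rule measurable_compose[OF var_meas[OF d T] measurable_restrict_subset[OF ST]])
  have e: "(\<lambda>x. restrict (restrict x T) S) = (\<lambda>x. restrict x S)"
    using ST by (auto simp: restrict_def fun_eq_iff)
  have "(\<lambda>x. restrict x S) \<in> measurable (var_algebra P M T) (PiM S M)" using m[unfolded e] .
  then show ?thesis unfolding var_algebra_def[of P M S]
    by (intro sets_image_in_sets) (simp_all add: var_algebra_def)
qed

lemma var_gen:
  assumes d: "distribution_on V M P" and S: "S \<subseteq> V" and T: "T \<subseteq> V"
  shows "sets (var_algebra P M (S \<union> T)) \<subseteq> sigma_sets (space P)
     {ES \<inter> ET | ES ET. ES \<in> sets (var_algebra P M S) \<and> ET \<in> sets (var_algebra P M T)}"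
proof -
  let ?G = "{ES \<inter> ET | ES ET. ES \<in> sets (var_algebra P M S) \<and> ET \<in> sets (var_algebra P M T)}"
  have sS: "subalgebra P (var_algebra P M S)" and sT: "subalgebra P (var_algebra P M T)"
    using var_subalg[OF d] S T by auto
  have GP: "?G \<subseteq> Pow (space P)"
    using subalg_sets[OF sS] subalg_sets[OF sT] sets.sets_into_space by blast
  have topS: "space P \<in> sets (var_algebra P M S)" and topT: "space P \<in> sets (var_algebra P M T)"
    using sets.top[of "var_algebra P M S"] sets.top[of "var_algebra P M T"] by (auto simp: var_algebra_def)
  have comp: "{x \<in> space P. x i \<in> A} \<in> ?G" if i: "i \<in> S \<union> T" and A: "A \<in> sets (M i)" for i A
  proof -
    have inK: "{x \<in> space P. x i \<in> A} \<in> sets (var_algebra P M K)" if K: "K \<subseteq> V" "i \<in> K" for K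
    proof -
      have "(\<lambda>f. f i) -` A \<inter> space (PiM K M) \<in> sets (PiM K M)"
        by (rule measurable_sets[OF measurable_component_singleton[OF \<open>i \<in> K\<close>, of M] A])
      hence "(\<lambda>x. restrict x K) -` ((\<lambda>f. f i) -` A \<inter> space (PiM K M)) \<inter> space P \<in> sets (var_algebra P M K)"
        unfolding var_algebra_def by (rule in_vimage_algebra)
      moreover have "(\<lambda>x. restrict x K) -` ((\<lambda>f. f i) -` A \<inter> space (PiM K M)) \<inter> space P = {x \<in> space P. x i \<in> A}"
        using restrict_in_space[OF d K(1)] K(2) by auto
      ultimately show ?thesis by simp
    qed
    show ?thesis
    proof (cases "i \<in> S")
      case True
      then have "{x \<in> space P. x i \<in> A} = {x \<in> space P. x i \<in> A} \<inter> space P" by auto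
      then show ?thesis using inK[OF S True] topT by blast
    next
      case False
      then have iT: "i \<in> T" using i by auto
      have "{x \<in> space P. x i \<in> A} = space P \<inter> {x \<in> space P. x i \<in> A}" by auto
      then show ?thesis using inK[OF T iT] topS by blast
    qed
  qed
  have "(\<lambda>x. restrict x (S \<union> T)) \<in> measurable (sigma (space P) ?G) (PiM (S \<union> T) M)"
  proof (rule measurable_PiM_single)
    show "(\<lambda>x. restrict x (S \<union> T)) \<in> space (sigma (space P) ?G) \<rightarrow> (\<Pi>\<^sub>E i\<in>S \<union> T. space (M i))"
      using restrict_in_space[OF d, of "S \<union> T"] S T GP by (auto simp: space_PiM)
    fix A i assume i: "i \<in> S \<union> T" and A: "A \<in> sets (M i)"
    have "{\<omega> \<in> space (sigma (space P) ?G). restrict \<omega> (S \<union> T) i \<in> A} = {x \<in> space P. x i \<in> A}"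
      using GP i by auto
    also have "\<dots> \<in> sets (sigma (space P) ?G)"
      using comp[OF i A] GP by auto
    finally show "{\<omega> \<in> space (sigma (space P) ?G). restrict \<omega> (S \<union> T) i \<in> A} \<in> sets (sigma (space P) ?G)" .
  qed
  then have "sets (var_algebra P M (S \<union> T)) \<subseteq> sets (sigma (space P) ?G)"
    unfolding var_algebra_def[of P M "S \<union> T"] by (intro sets_image_in_sets) (use GP in auto)
  then show ?thesis using GP by simp
qed



lemma cond_indep_ci: "cond_indep P M A B C = ci P (var_algebra P M A) (var_algebra P M B) (var_algebra P M C)"
  unfolding cond_indep_def ci_def ..

lemma CI_sym:
  assumes c: "cond_indep P M A B C" shows "cond_indep P M B A C"
  unfolding cond_indep_def
proof (intro ballI)
  fix EA EB assume "EA \<in> sets (var_algebra P M B)" "EB \<in> sets (var_algebra P M A)"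
  then have "AE x in P. real_cond_exp P (var_algebra P M C) (indicator (EB \<inter> EA)) x =
        real_cond_exp P (var_algebra P M C) (indicator EB) x * real_cond_exp P (var_algebra P M C) (indicator EA) x"
    using c unfolding cond_indep_def by blast
  then show "AE x in P. real_cond_exp P (var_algebra P M C) (indicator (EA \<inter> EB)) x =
        real_cond_exp P (var_algebra P M C) (indicator EA) x * real_cond_exp P (var_algebra P M C) (indicator EB) x"
    by (simp add: Int_commute mult.commute)
qed

lemma CI_dec:
  assumes d: "distribution_on V M P" and "A' \<subseteq> A" "B' \<subseteq> B" "A \<subseteq> V" "B \<subseteq> V"
    and c: "cond_indep P M A B C"
  shows "cond_indep P M A' B' C"
  using c var_mono[OF d assms(2,4)] var_mono[OF d assms(3,5)] unfolding cond_indep_def by blast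

lemma CI_wu:
  assumes d: "distribution_on V M P" and V: "A \<subseteq> V" "B \<subseteq> V" "C \<subseteq> V" and W: "W \<subseteq> B"
    and c: "cond_indep P M A B C"
  shows "cond_indep P M A B (C \<union> W)"
proof -
  have P: "prob_space P" using d by (simp add: distribution_on_def)
  let ?F = "var_algebra P M"
  have CW: "C \<union> W \<subseteq> V" using V W by auto
  have BC: "B \<union> C \<subseteq> V" using V by auto
  have sA: "subalgebra P (?F A)" and sB: "subalgebra P (?F B)" and sC: "subalgebra P (?F C)"
    and sCW: "subalgebra P (?F (C \<union> W))" and sBC: "subalgebra P (?F (B \<union> C))"
    using var_subalg[OF d] V CW BC by auto
  have BBC: "sets (?F B) \<subseteq> sets (?F (B \<union> C))" by (rule var_mono[OF d _ BC]) auto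
  have CBC: "sets (?F C) \<subseteq> sets (?F (B \<union> C))" by (rule var_mono[OF d _ BC]) auto
  have CWBC: "sets (?F (C \<union> W)) \<subseteq> sets (?F (B \<union> C))" by (rule var_mono[OF d _ BC]) (use W in auto)
  have CCW: "sets (?F C) \<subseteq> sets (?F (C \<union> W))" by (rule var_mono[OF d _ CW]) auto
  interpret CWs: sigma_finite_subalgebra P "?F (C \<union> W)" by (rule sfs[OF P sCW])
  interpret Cs: sigma_finite_subalgebra P "?F C" by (rule sfs[OF P sC])
  show ?thesis unfolding cond_indep_ci
  proof (rule ci_of_ce[OF P sA sB sCW sBC BBC CWBC], intro ballI)
    fix EA assume EA: "EA \<in> sets (?F A)"
    have EAs[measurable]: "EA \<in> sets P" using subalg_sets[OF sA EA] .
    define a :: "_ \<Rightarrow> real" where "a = indicator EA"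
    have am[measurable]: "a \<in> borel_measurable P" unfolding a_def by measurable
    have ia: "integrable P a" unfolding a_def by (rule ind_int[OF P EAs])
    have 1: "AE x in P. real_cond_exp P (?F (B \<union> C)) a x = real_cond_exp P (?F C) a x"
      unfolding a_def
      by (rule ce_of_ci[OF P sA sB sC sBC CBC var_gen[OF d V(2,3)] c[unfolded cond_indep_ci] EA])
    have 2: "AE x in P. real_cond_exp P (?F (C \<union> W)) (real_cond_exp P (?F (B \<union> C)) a) x = real_cond_exp P (?F (C \<union> W)) a x"
      by (rule CWs.real_cond_exp_nested_subalg[OF sBC subalg_sub[OF sBC sCW CWBC] ia])
    have 3: "AE x in P. real_cond_exp P (?F (C \<union> W)) (real_cond_exp P (?F (B \<union> C)) a) x = real_cond_exp P (?F (C \<union> W)) (real_cond_exp P (?F C) a) x"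
      by (rule CWs.real_cond_exp_cong[OF 1]) simp_all
    have 4: "AE x in P. real_cond_exp P (?F (C \<union> W)) (real_cond_exp P (?F C) a) x = real_cond_exp P (?F C) a x"
      by (rule CWs.real_cond_exp_F_meas[OF Cs.real_cond_exp_int(1)[OF ia]])
         (rule measurable_from_subalg[OF subalg_sub[OF sCW sC CCW]], simp)
    have "AE x in P. real_cond_exp P (?F (B \<union> C)) a x = real_cond_exp P (?F (C \<union> W)) a x"
      using 1 2 3 4 by eventually_elim linarith
    then show "AE x in P. real_cond_exp P (?F (B \<union> C)) (indicator EA) x = real_cond_exp P (?F (C \<union> W)) (indicator EA) x"
      unfolding a_def .
  qed
qed

lemma var_empty:
  assumes d: "distribution_on V M P"
  shows "sets (var_algebra P M {}) \<subseteq> {{}, space P}"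
proof -
  have r: "(\<lambda>x. restrict x {}) = (\<lambda>x k. undefined)" by (auto simp: fun_eq_iff)
  have "(\<lambda>x. restrict x {}) \<in> space P \<rightarrow> space (PiM {} M)" by (simp add: r space_PiM_empty)
  then show ?thesis unfolding var_algebra_def
    by (subst sets_vimage_algebra2) (auto simp: sets_PiM_empty r)
qed

lemma CI_triv:
  assumes d: "distribution_on V M P" and V: "B \<subseteq> V" "C \<subseteq> V"
  shows "cond_indep P M {} B C"
  unfolding cond_indep_def
proof (intro ballI)
  fix EA EB assume EA: "EA \<in> sets (var_algebra P M {})" and EB: "EB \<in> sets (var_algebra P M B)"
  have P: "prob_space P" using d by (simp add: distribution_on_def)
  have sC: "subalgebra P (var_algebra P M C)" and sB: "subalgebra P (var_algebra P M B)" using var_subalg[OF d] V by auto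
  interpret Cs: sigma_finite_subalgebra P "var_algebra P M C" by (rule sfs[OF P sC])
  have EBs: "EB \<in> sets P" using subalg_sets[OF sB EB] .
  have "EA = {} \<or> EA = space P" using var_empty[OF d] EA by blast
  then show "AE x in P. real_cond_exp P (var_algebra P M C) (indicator (EA \<inter> EB)) x =
        real_cond_exp P (var_algebra P M C) (indicator EA) x * real_cond_exp P (var_algebra P M C) (indicator EB) x"
  proof
    assume e: "EA = {}"
    have a0: "AE x in P. real_cond_exp P (var_algebra P M C) (\<lambda>x. 0) x = 0"
      by (rule Cs.real_cond_exp_F_meas) simp_all
    have z1: "indicator {} = (\<lambda>x. 0::real)" by (rule ext) simp
    have z2: "indicator ({} \<inter> EB) = (\<lambda>x. 0::real)" by (rule ext) simp
    show ?thesis unfolding e z1 z2 using a0 by eventually_elim simp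
  next
    assume e: "EA = space P"
    have i: "EA \<inter> EB = EB" using e EBs sets.sets_into_space by blast
    have i2: "space P \<inter> EB = EB" using i e by simp
    have sp: "space P \<in> sets (var_algebra P M C)" using sets.top[of "var_algebra P M C"] by (simp add: var_algebra_def)
    have "AE x in P. real_cond_exp P (var_algebra P M C) (indicator (space P)) x = indicator (space P) x"
      by (rule Cs.real_cond_exp_F_meas) (simp_all add: ind_int[OF P] sp borel_measurable_indicator)
    then show ?thesis unfolding e i2 using AE_space by eventually_elim simp
  qed
qed



definition blk :: "'v set \<Rightarrow> 'v set \<Rightarrow> 'v set \<Rightarrow> 'v \<Rightarrow> nat" where
  "blk A B C v = (if v \<in> C then 0 else if v \<in> A \<or> v \<in> B then 1 else 2)"

definition key :: "'v set \<Rightarrow> 'v set \<Rightarrow> 'v set \<Rightarrow> ('v \<Rightarrow> nat) \<Rightarrow> nat \<Rightarrow> 'v \<Rightarrow> nat" where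
  "key A B C f N v = blk A B C v * N + f v"

definition mkG :: "'v set \<Rightarrow> 'v set \<Rightarrow> 'v set \<Rightarrow> 'v set \<Rightarrow> ('v \<Rightarrow> nat) \<Rightarrow> nat \<Rightarrow> 'v mgraph" where
  "mkG V A B C f N = \<lparr>dir = {(u,v). u \<in> V \<and> v \<in> V \<and> key A B C f N u < key A B C f N v \<and>
      \<not> ((u \<in> A \<and> v \<in> B) \<or> (u \<in> B \<and> v \<in> A))}, und = {}, bid = {}\<rparr>"

lemma key_inj:
  assumes "inj_on f V" "\<forall>v\<in>V. f v < N" "u \<in> V" "v \<in> V" "key A B C f N u = key A B C f N v"
  shows "u = v"
proof -
  have fu: "f u < N" "f v < N" using assms by auto
  have "key A B C f N u mod N = f u" "key A B C f N v mod N = f v"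
    using fu by (simp_all add: key_def)
  then have "f u = f v" using assms(5) by metis
  then show ?thesis using assms(1,3,4) by (auto dest: inj_onD)
qed

lemma key_blk:
  assumes "f u < N" "f v < N" "key A B C f N u < key A B C f N v"
  shows "blk A B C u \<le> blk A B C v"
proof (rule ccontr)
  assume "\<not> ?thesis"
  then have "blk A B C v + 1 \<le> blk A B C u" by simp
  then have "(blk A B C v + 1) * N \<le> blk A B C u * N" by (rule mult_right_mono) simp
  then show False using assms unfolding key_def by (simp add: algebra_simps)
qed

lemma key_lt_blk:
  assumes "f u < N" "blk A B C u < blk A B C v"
  shows "key A B C f N u < key A B C f N v"
proof -
  have "(blk A B C u + 1) * N \<le> blk A B C v * N" using assms(2) by (intro mult_right_mono) auto
  then show ?thesis using assms unfolding key_def by (simp add: algebra_simps)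
qed

lemma mkG_DAG:
  assumes "inj_on f V" "\<forall>v\<in>V. f v < N"
  shows "DAG V (mkG V A B C f N)"
proof -
  have "dir (mkG V A B C f N) \<subseteq> inv_image less_than (key A B C f N)"
    by (auto simp: mkG_def)
  then have "acyclic (dir (mkG V A B C f N))"
    by (intro wf_acyclic wf_subset[OF wf_inv_image[OF wf_less_than]])
  then show ?thesis
    by (auto simp: DAG_def mixed_graph_def mkG_def sym_def)
qed

lemma walk_step:
  assumes "walk G vs es" "k < length es"
  shows "step G (es ! k) (vs ! k) (vs ! Suc k)"
  using assms by (auto simp: walk_def)

lemma mc_dag:
  assumes "und G = {}" "bid G = {}"
  shows "m_connecting G S vs es \<longleftrightarrow> walk G vs es \<and>
    (\<forall>k \<le> length es. if 0 < k \<and> k < length es \<and> es ! (k - 1) = Fwd \<and> es ! k = Bwd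
        then vs ! k \<in> S else vs ! k \<notin> S)"
proof -
  have key: "\<And>k. walk G vs es \<Longrightarrow> k < length es \<Longrightarrow> es ! k = Fwd \<or> es ! k = Bwd"
  proof -
    fix k assume "walk G vs es" "k < length es"
    then have "step G (es ! k) (vs ! k) (vs ! Suc k)" by (rule walk_step)
    then show "es ! k = Fwd \<or> es ! k = Bwd" using assms by (cases "es ! k") auto
  qed
  have sec: "walk G vs es \<Longrightarrow> section es p q \<longleftrightarrow> p = q \<and> q \<le> length es" for p q
  proof
    assume w: "walk G vs es" and s: "section es p q"
    show "p = q \<and> q \<le> length es"
    proof (rule ccontr)
      assume "\<not> ?thesis"
      then have "p < q" "q \<le> length es" using s by (auto simp: section_def)
      then have "es ! p = Lin" using s by (auto simp: section_def)
      then show False using key[OF w, of p] \<open>p < q\<close> \<open>q \<le> length es\<close> by auto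
    qed
  next
    assume w: "walk G vs es" and pq: "p = q \<and> q \<le> length es"
    have "0 < q \<Longrightarrow> q - 1 < length es" using pq by auto
    then show "section es p q"
      unfolding section_def using pq key[OF w, of q] key[OF w, of "q - 1"] by fastforce
  qed
  have col: "walk G vs es \<Longrightarrow> k \<le> length es \<Longrightarrow> collider_section es k k \<longleftrightarrow>
      (0 < k \<and> k < length es \<and> es ! (k - 1) = Fwd \<and> es ! k = Bwd)" for k
  proof -
    assume w: "walk G vs es" and k: "k \<le> length es"
    have "0 < k \<Longrightarrow> k < length es \<Longrightarrow> es ! (k - 1) = Fwd \<or> es ! (k - 1) = Bwd" using key[OF w, of "k - 1"] by auto
    then show ?thesis using sec[OF w, of k k] key[OF w, of k] k
      unfolding collider_section_def head_at_end_def head_at_start_def by auto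
  qed
  show ?thesis
  proof
    assume m: "m_connecting G S vs es"
    then have w: "walk G vs es" by (simp add: m_connecting_def)
    show "walk G vs es \<and> (\<forall>k \<le> length es. if 0 < k \<and> k < length es \<and> es ! (k - 1) = Fwd \<and> es ! k = Bwd
        then vs ! k \<in> S else vs ! k \<notin> S)"
    proof (intro conjI allI impI w)
      fix k assume k: "k \<le> length es"
      have "section es k k" using sec[OF w] k by simp
      then have "if collider_section es k k then \<exists>j\<in>{k..k}. vs ! j \<in> S else \<forall>j\<in>{k..k}. vs ! j \<notin> S"
        using m unfolding m_connecting_def by blast
      then show "if 0 < k \<and> k < length es \<and> es ! (k - 1) = Fwd \<and> es ! k = Bwd
        then vs ! k \<in> S else vs ! k \<notin> S"
        using col[OF w k] by (auto split: if_splits)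
    qed
  next
    assume h: "walk G vs es \<and> (\<forall>k \<le> length es. if 0 < k \<and> k < length es \<and> es ! (k - 1) = Fwd \<and> es ! k = Bwd
        then vs ! k \<in> S else vs ! k \<notin> S)"
    then have w: "walk G vs es" by simp
    show "m_connecting G S vs es"
      unfolding m_connecting_def
    proof (intro conjI allI impI w)
      fix p q assume s: "section es p q"
      then have pq: "p = q" "q \<le> length es" using sec[OF w] by auto
      then show "if collider_section es p q then \<exists>k\<in>{p..q}. vs ! k \<in> S else \<forall>k\<in>{p..q}. vs ! k \<notin> S"
        using h col[OF w, of q] by auto
    qed
  qed
qed



lemma dir_mkG: "(u,v) \<in> dir (mkG V A B C f N) \<longleftrightarrow> u \<in> V \<and> v \<in> V \<and> key A B C f N u < key A B C f N v \<and>
      \<not> ((u \<in> A \<and> v \<in> B) \<or> (u \<in> B \<and> v \<in> A))"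
  by (simp add: mkG_def)

lemma blk_le2: "blk A B C v \<le> 2" by (simp add: blk_def)

lemma sep_main:
  assumes inj: "inj_on f V" and bd: "\<forall>v\<in>V. f v < N" and t: "(A,B,C) \<in> triples V"
  shows "separated (mkG V A B C f N) A B C"
  unfolding separated_def
proof (rule notI, elim exE conjE)
  fix vs es
  let ?G = "mkG V A B C f N"
  let ?k = "key A B C f N"
  let ?b = "blk A B C"
  assume mc: "m_connecting ?G C vs es" and hA: "hd vs \<in> A" and lB: "last vs \<in> B"
  have AB: "A \<inter> B = {}" and AC: "A \<inter> C = {}" and BC: "B \<inter> C = {}" using t by (auto simp: triples_def)
  have "und ?G = {}" "bid ?G = {}" by (simp_all add: mkG_def)
  note mcd = mc_dag[OF this, of C vs es]
  have w: "walk ?G vs es" using mc mcd by simp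
  have cond: "\<And>k. k \<le> length es \<Longrightarrow> (if 0 < k \<and> k < length es \<and> es ! (k - 1) = Fwd \<and> es ! k = Bwd
        then vs ! k \<in> C else vs ! k \<notin> C)" using mc mcd by blast
  define n where "n = length es"
  have lv: "length vs = Suc n" using w by (simp add: walk_def n_def)
  have v0: "vs ! 0 \<in> A" using hA lv by (simp add: hd_conv_nth[symmetric] length_greater_0_conv[symmetric])
  have "vs \<noteq> []" using lv by auto
  then have "last vs = vs ! n" using lv by (simp add: last_conv_nth)
  then have vn: "vs ! n \<in> B" using lB by simp
  have edge: "(es ! i = Fwd \<and> (vs ! i, vs ! Suc i) \<in> dir ?G) \<or> (es ! i = Bwd \<and> (vs ! Suc i, vs ! i) \<in> dir ?G)"
    if "i < n" for i
  proof -
    have "step ?G (es ! i) (vs ! i) (vs ! Suc i)" using walk_step[OF w] that n_def by simp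
    then show ?thesis by (cases "es ! i") (auto simp: mkG_def)
  qed
  define k where "k = (LEAST k. vs ! k \<notin> A)"
  have exn: "vs ! n \<notin> A" using vn AB by blast
  have hk: "vs ! k \<notin> A" unfolding k_def by (rule LeastI[of _ n]) (rule exn)
  have kn: "k \<le> n" unfolding k_def by (rule Least_le) (rule exn)
  have k0: "k \<noteq> 0" proof assume "k = 0" then show False using hk v0 by simp qed
  define j where "j = k - 1"
  have jk: "Suc j = k" using k0 j_def by simp
  have jn: "j < n" using jk kn by simp
  have vj: "vs ! j \<in> A" using not_less_Least[of j "\<lambda>k. vs ! k \<notin> A"] jk unfolding k_def[symmetric] by auto
  have bj: "?b (vs ! j) = 1" using vj AC by (auto simp: blk_def)
  have ej: "(es ! j = Fwd \<and> (vs ! j, vs ! k) \<in> dir ?G) \<or> (es ! j = Bwd \<and> (vs ! k, vs ! j) \<in> dir ?G)"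
    using edge[OF jn] jk by simp
  have vkV: "vs ! k \<in> V" and vjV: "vs ! j \<in> V" and vkB: "vs ! k \<notin> B"
    using ej vj by (auto simp: dir_mkG)
  show False
  proof (cases "vs ! k \<in> C")
    case True
    have "?b (vs ! k) = 0" using True by (simp add: blk_def)
    then have lt: "?k (vs ! k) < ?k (vs ! j)" using key_lt_blk[of f "vs ! k" N A B C "vs ! j"] bd vkV bj by simp
    then have "es ! j = Bwd" using ej by (auto simp: dir_mkG)
    then have "vs ! k \<notin> C" using cond[of k] kn k0 jk unfolding n_def by (auto simp: j_def)
    then show False using True by simp
  next
    case False
    have bk: "?b (vs ! k) = 2" using False hk vkB by (simp add: blk_def)
    have "es ! j = Fwd"
    proof (rule ccontr)
      assume "es ! j \<noteq> Fwd"
      then have "?k (vs ! k) < ?k (vs ! j)" using ej by (auto simp: dir_mkG)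
      moreover have "f (vs ! k) < N" "f (vs ! j) < N" using bd vkV vjV by auto
      ultimately have "?b (vs ! k) \<le> ?b (vs ! j)" using key_blk[of f "vs ! k" N "vs ! j" A B C] by simp
      then show False using bk bj by simp
    qed
    have claim: "k + m \<le> n \<longrightarrow> vs ! (k + m) \<in> V \<and> ?b (vs ! (k + m)) = 2 \<and> es ! (k + m - 1) = Fwd" for m
    proof (induction m)
      case 0 then show ?case using vkV bk \<open>es ! j = Fwd\<close> j_def by simp
    next
      case (Suc m)
      show ?case
      proof
        assume le: "k + Suc m \<le> n"
        define i where "i = k + m"
        have i_n: "i < n" using le i_def by simp
        have IH: "vs ! i \<in> V" "?b (vs ! i) = 2" "es ! (i - 1) = Fwd" using Suc le i_def by auto
        have "es ! i = Fwd"
        proof (rule ccontr)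
          assume "es ! i \<noteq> Fwd"
          then have "es ! i = Bwd" using edge[OF i_n] by auto
          then have "vs ! i \<in> C" using cond[of i] i_n IH(3) k0 i_def unfolding n_def by auto
          then show False using IH(2) by (simp add: blk_def)
        qed
        then have d: "(vs ! i, vs ! Suc i) \<in> dir ?G" using edge[OF i_n] by auto
        then have "vs ! Suc i \<in> V" "?k (vs ! i) < ?k (vs ! Suc i)" by (auto simp: dir_mkG)
        note this
        moreover have "f (vs ! i) < N" "f (vs ! Suc i) < N" using bd IH(1) \<open>vs ! Suc i \<in> V\<close> by auto
        ultimately have "?b (vs ! i) \<le> ?b (vs ! Suc i)" using key_blk[of f "vs ! i" N "vs ! Suc i" A B C] by simp
        then have "?b (vs ! Suc i) = 2" using IH(2) blk_le2[of A B C "vs ! Suc i"] by simp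
        then show "vs ! (k + Suc m) \<in> V \<and> ?b (vs ! (k + Suc m)) = 2 \<and> es ! (k + Suc m - 1) = Fwd"
          using \<open>vs ! Suc i \<in> V\<close> \<open>es ! i = Fwd\<close> i_def by simp
      qed
    qed
    from claim[of "n - k"] kn have "?b (vs ! n) = 2" by simp
    moreover have "?b (vs ! n) = 1" using vn BC by (auto simp: blk_def)
    ultimately show False by simp
  qed
qed




lemma mc2:
  assumes G: "und G = {}" "bid G = {}" and st: "step G e x y" and e: "e = Fwd \<or> e = Bwd"
    and "x \<notin> S" "y \<notin> S"
  shows "m_connecting G S [x, y] [e]"
  unfolding mc_dag[OF G]
proof (intro conjI allI impI)
  show "walk G [x, y] [e]" using st by (simp add: walk_def)
  fix k assume "k \<le> length [e]"
  then have "k = 0 \<or> k = 1" by (simp add: le_Suc_eq)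
  then show "if 0 < k \<and> k < length [e] \<and> [e] ! (k - 1) = Fwd \<and> [e] ! k = Bwd then [x, y] ! k \<in> S else [x, y] ! k \<notin> S"
    using assms by auto
qed

lemma mc3a:
  assumes G: "und G = {}" "bid G = {}" and "(c, x) \<in> dir G" "(c, y) \<in> dir G"
    and "x \<notin> S" "y \<notin> S" "c \<notin> S"
  shows "m_connecting G S [x, c, y] [Bwd, Fwd]"
  unfolding mc_dag[OF G]
proof (intro conjI allI impI)
  show "walk G [x, c, y] [Bwd, Fwd]" using assms by (auto simp: walk_def less_Suc_eq)
  fix k assume "k \<le> length [Bwd, Fwd]"
  then have "k = 0 \<or> k = 1 \<or> k = 2" by (simp add: le_Suc_eq numeral_2_eq_2)
  then show "if 0 < k \<and> k < length [Bwd, Fwd] \<and> [Bwd, Fwd] ! (k - 1) = Fwd \<and> [Bwd, Fwd] ! k = Bwd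
    then [x, c, y] ! k \<in> S else [x, c, y] ! k \<notin> S"
    using assms by auto
qed

lemma mc3b:
  assumes G: "und G = {}" "bid G = {}" and "(x, d) \<in> dir G" "(y, d) \<in> dir G"
    and "x \<notin> S" "y \<notin> S" "d \<in> S"
  shows "m_connecting G S [x, d, y] [Fwd, Bwd]"
  unfolding mc_dag[OF G]
proof (intro conjI allI impI)
  show "walk G [x, d, y] [Fwd, Bwd]" using assms by (auto simp: walk_def less_Suc_eq)
  fix k assume "k \<le> length [Fwd, Bwd]"
  then have "k = 0 \<or> k = 1 \<or> k = 2" by (simp add: le_Suc_eq numeral_2_eq_2)
  then show "if 0 < k \<and> k < length [Fwd, Bwd] \<and> [Fwd, Bwd] ! (k - 1) = Fwd \<and> [Fwd, Bwd] ! k = Bwd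
    then [x, d, y] ! k \<in> S else [x, d, y] ! k \<notin> S"
    using assms by auto
qed

lemma adj:
  assumes inj: "inj_on f V" and bd: "\<forall>v\<in>V. f v < N" and "u \<in> V" "v \<in> V" "u \<noteq> v"
    and "\<not> ((u \<in> A \<and> v \<in> B) \<or> (u \<in> B \<and> v \<in> A))"
  shows "(u, v) \<in> dir (mkG V A B C f N) \<or> (v, u) \<in> dir (mkG V A B C f N)"
proof -
  have "key A B C f N u \<noteq> key A B C f N v" using key_inj[OF inj bd] assms by blast
  then show ?thesis using assms by (auto simp: dir_mkG linorder_neq_iff)
qed

lemma sep_upper:
  assumes inj: "inj_on f V" and bd: "\<forall>v\<in>V. f v < N" and t: "(A,B,C) \<in> triples V"
    and J: "(X,Y,S) \<in> J_graph V (mkG V A B C f N)" and X: "X \<noteq> {}" and Y: "Y \<noteq> {}"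
  shows "(X \<subseteq> A \<and> Y \<subseteq> B \<or> X \<subseteq> B \<and> Y \<subseteq> A) \<and> C \<subseteq> S \<and> S \<subseteq> A \<union> B \<union> C"
proof -
  let ?G = "mkG V A B C f N"
  let ?b = "blk A B C"
  have G: "und ?G = {}" "bid ?G = {}" by (simp_all add: mkG_def)
  have AB: "A \<inter> B = {}" and AC: "A \<inter> C = {}" and BC: "B \<inter> C = {}" and CV: "C \<subseteq> V"
    using t by (auto simp: triples_def)
  have XV: "X \<subseteq> V" and YV: "Y \<subseteq> V" and SV: "S \<subseteq> V" and XY: "X \<inter> Y = {}"
    and XS: "X \<inter> S = {}" and YS: "Y \<inter> S = {}" and sep: "separated ?G X Y S"
    using J by (auto simp: J_graph_def triples_def)
  have nomc: "\<not> m_connecting ?G S vs es" if "hd vs \<in> X" "last vs \<in> Y" for vs es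
    using sep that unfolding separated_def by blast
  have nonadj: "(x \<in> A \<and> y \<in> B) \<or> (x \<in> B \<and> y \<in> A)" if x: "x \<in> X" and y: "y \<in> Y" for x y
  proof (rule ccontr)
    assume n: "\<not> ?thesis"
    have "x \<noteq> y" using x y XY by blast
    then have "(x, y) \<in> dir ?G \<or> (y, x) \<in> dir ?G" using adj[OF inj bd] n x y XV YV by blast
    then have "step ?G Fwd x y \<or> step ?G Bwd x y" by auto
    then obtain e where "step ?G e x y" "e = Fwd \<or> e = Bwd" by blast
    then have "m_connecting ?G S [x, y] [e]" using mc2[OF G] x y XS YS by blast
    then show False using nomc[of "[x, y]" "[e]"] x y by simp
  qed
  obtain x0 where x0: "x0 \<in> X" using X by blast
  obtain y0 where y0: "y0 \<in> Y" using Y by blast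
  have p1: "X \<subseteq> A \<and> Y \<subseteq> B \<or> X \<subseteq> B \<and> Y \<subseteq> A"
  proof (cases "x0 \<in> A")
    case True
    have "Y \<subseteq> B" using nonadj[OF x0] True AB by blast
    then have "X \<subseteq> A" using nonadj[OF _ y0] y0 AB by blast
    then show ?thesis using \<open>Y \<subseteq> B\<close> by simp
  next
    case False
    then have "x0 \<in> B" using nonadj[OF x0 y0] by blast
    have "Y \<subseteq> A" using nonadj[OF x0] \<open>x0 \<in> B\<close> AB by blast
    then have "X \<subseteq> B" using nonadj[OF _ y0] y0 AB by blast
    then show ?thesis using \<open>Y \<subseteq> A\<close> by simp
  qed
  have x0ab: "x0 \<in> A \<or> x0 \<in> B" and y0ab: "y0 \<in> A \<or> y0 \<in> B" using p1 x0 y0 by blast+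
  have bx0: "?b x0 = 1" using x0ab AC BC by (auto simp: blk_def)
  have by0: "?b y0 = 1" using y0ab AC BC by (auto simp: blk_def)
  have x0V: "x0 \<in> V" and y0V: "y0 \<in> V" using x0 y0 XV YV by auto
  have p2: "C \<subseteq> S"
  proof
    fix c assume c: "c \<in> C"
    show "c \<in> S"
    proof (rule ccontr)
      assume cS: "c \<notin> S"
      have cV: "c \<in> V" using c CV by auto
      have bc: "?b c = 0" using c by (simp add: blk_def)
      have "key A B C f N c < key A B C f N x0" "key A B C f N c < key A B C f N y0"
        using key_lt_blk[of f c N A B C] bd cV bc bx0 by0 by auto
      moreover have "c \<notin> A" "c \<notin> B" using c AC BC by auto
      ultimately have "(c, x0) \<in> dir ?G" "(c, y0) \<in> dir ?G" using cV x0V y0V by (auto simp: dir_mkG)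
      then have "m_connecting ?G S [x0, c, y0] [Bwd, Fwd]"
        using mc3a[OF G] x0 y0 XS YS cS by blast
      then show False using nomc[of "[x0, c, y0]" "[Bwd, Fwd]"] x0 y0 by simp
    qed
  qed
  have p3: "S \<subseteq> A \<union> B \<union> C"
  proof
    fix d assume d: "d \<in> S"
    show "d \<in> A \<union> B \<union> C"
    proof (rule ccontr)
      assume nd: "d \<notin> A \<union> B \<union> C"
      have dV: "d \<in> V" using d SV by auto
      have bd2: "?b d = 2" using nd by (simp add: blk_def)
      have "key A B C f N x0 < key A B C f N d" "key A B C f N y0 < key A B C f N d"
        using key_lt_blk[of f _ N A B C d] bd x0V y0V bd2 bx0 by0 by auto
      then have "(x0, d) \<in> dir ?G" "(y0, d) \<in> dir ?G" using nd dV x0V y0V by (auto simp: dir_mkG)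
      then have "m_connecting ?G S [x0, d, y0] [Fwd, Bwd]"
        using mc3b[OF G] x0 y0 XS YS d by blast
      then show False using nomc[of "[x0, d, y0]" "[Fwd, Bwd]"] x0 y0 by simp
    qed
  qed
  show ?thesis using p1 p2 p3 by blast
qed



lemma CI_closure:
  assumes d: "distribution_on V M P" and V: "A \<subseteq> V" "B \<subseteq> V" "C \<subseteq> V"
    and c: "cond_indep P M A B C" and XY: "X \<subseteq> A" "Y \<subseteq> B" and S: "C \<subseteq> S" "S \<subseteq> A \<union> B \<union> C"
  shows "cond_indep P M X Y S"
proof -
  have c1: "cond_indep P M A B (C \<union> (S \<inter> B))" by (rule CI_wu[OF d V _ c]) auto
  have c2: "cond_indep P M B A (C \<union> (S \<inter> B))" by (rule CI_sym[OF c1])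
  have c3: "cond_indep P M B A (C \<union> (S \<inter> B) \<union> (S \<inter> A))" by (rule CI_wu[OF d V(2) V(1) _ _ c2]) (use V in auto)
  have e: "C \<union> (S \<inter> B) \<union> (S \<inter> A) = S" using S by auto
  have "cond_indep P M Y X S" using CI_dec[OF d XY(2) XY(1) V(2) V(1) c3[unfolded e]] .
  then show ?thesis by (rule CI_sym)
qed

lemma finite_triples: "finite V \<Longrightarrow> finite (triples V)"
  by (rule finite_subset[of _ "Pow V \<times> Pow V \<times> Pow V"]) (auto simp: triples_def)

lemma exists_min:
  assumes fin: "finite V" and G0: "G0 \<in> GG" and sub: "J_graph V G0 \<subseteq> J_dist V M P"
  shows "\<exists>G\<in>GG. J_graph V G0 \<subseteq> J_graph V G \<and> pearl_minimal V GG M P G"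
proof -
  let ?S = "{J_graph V G | G. G \<in> GG \<and> J_graph V G0 \<subseteq> J_graph V G \<and> J_graph V G \<subseteq> J_dist V M P}"
  have "?S \<subseteq> Pow (triples V)" by (auto simp: J_graph_def)
  then have fS: "finite ?S" using finite_triples[OF fin] by (meson finite_Pow_iff finite_subset)
  have nS: "?S \<noteq> {}" using G0 sub by blast
  obtain m where m: "m \<in> ?S" and mx: "\<forall>b\<in>?S. m \<le> b \<longrightarrow> m = b"
    using finite_has_maximal[OF fS nS] by blast
  obtain G where G: "G \<in> GG" "m = J_graph V G" "J_graph V G0 \<subseteq> J_graph V G" "J_graph V G \<subseteq> J_dist V M P"
    using m by blast
  have "pearl_minimal V GG M P G"
    unfolding pearl_minimal_def
  proof (intro conjI G(1) G(4) notI)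
    assume "\<exists>G'\<in>GG. J_graph V G \<subset> J_graph V G' \<and> J_graph V G' \<subseteq> J_dist V M P"
    then obtain G' where "G' \<in> GG" "J_graph V G \<subset> J_graph V G'" "J_graph V G' \<subseteq> J_dist V M P" by blast
    then have "J_graph V G' \<in> ?S" using G(3) by blast
    then show False using mx G(2) \<open>J_graph V G \<subset> J_graph V G'\<close> by auto
  qed
  then show ?thesis using G by blast
qed

lemma triv_in_J:
  assumes d: "distribution_on V M P" and t: "(X,Y,S) \<in> triples V" and e: "X = {} \<or> Y = {}"
  shows "(X,Y,S) \<in> J_dist V M P"
proof -
  have V: "X \<subseteq> V" "Y \<subseteq> V" "S \<subseteq> V" using t by (auto simp: triples_def)
  have "cond_indep P M X Y S"
    using e CI_triv[OF d V(2,3)] CI_sym[OF CI_triv[OF d V(1,3)]] by auto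
  then show ?thesis using t by (simp add: J_dist_def)
qed

lemma sep_triv: "X = {} \<or> Y = {} \<Longrightarrow> separated G X Y S"
  by (auto simp: separated_def)

theorem proposition11:
  fixes V :: "'v set" and GG :: "'v mgraph set"
    and M :: "'v \<Rightarrow> 'b measure" and P :: "('v \<Rightarrow> 'b) measure"
  assumes "finite V"
    and "\<forall>G \<in> GG. anterial V G"
    and "\<forall>G. DAG V G \<longrightarrow> G \<in> GG"
    and "distribution_on V M P"
  shows "unique_pearl_minimal V GG M P \<longleftrightarrow> (\<exists>G \<in> GG. faithful V M P G)"
proof
  assume U: "unique_pearl_minimal V GG M P"
  note fin = assms(1) and dag = assms(3) and d = assms(4)
  from finite_imp_inj_to_nat_seg[OF fin] obtain f n where fV: "f ` V = {i::nat. i < n}" and inj: "inj_on f V"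
    by blast
  have bd: "\<forall>v\<in>V. f v < n"
  proof
    fix v assume "v \<in> V"
    then have "f v \<in> f ` V" by (rule imageI)
    then show "f v < n" using fV by simp
  qed
  have Jsub: "J_graph V (mkG V A B C f n) \<subseteq> J_dist V M P"
    if t: "(A,B,C) \<in> triples V" and c: "cond_indep P M A B C" for A B C
  proof
    fix u assume u: "u \<in> J_graph V (mkG V A B C f n)"
    obtain X Y S where u': "u = (X,Y,S)" by (cases u) auto
    have tu: "(X,Y,S) \<in> triples V" using u u' by (simp add: J_graph_def)
    have V: "A \<subseteq> V" "B \<subseteq> V" "C \<subseteq> V" using t by (auto simp: triples_def)
    show "u \<in> J_dist V M P"
    proof (cases "X = {} \<or> Y = {}")
      case True then show ?thesis using triv_in_J[OF d tu] u' by simp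
    next
      case False
      then have "(X \<subseteq> A \<and> Y \<subseteq> B \<or> X \<subseteq> B \<and> Y \<subseteq> A) \<and> C \<subseteq> S \<and> S \<subseteq> A \<union> B \<union> C"
        using sep_upper[OF inj bd t, of X Y S] u u' by auto
      then have "cond_indep P M X Y S"
      proof (elim conjE disjE)
        assume "X \<subseteq> A" "Y \<subseteq> B" "C \<subseteq> S" "S \<subseteq> A \<union> B \<union> C"
        then show ?thesis by (rule CI_closure[OF d V c])
      next
        assume "X \<subseteq> B" "Y \<subseteq> A" "C \<subseteq> S" "S \<subseteq> A \<union> B \<union> C"
        then have "S \<subseteq> B \<union> A \<union> C" by auto
        then show ?thesis using CI_closure[OF d V(2) V(1) V(3) CI_sym[OF c] \<open>X \<subseteq> B\<close> \<open>Y \<subseteq> A\<close> \<open>C \<subseteq> S\<close>] by blast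
      qed
      then show ?thesis using tu u' by (simp add: J_dist_def)
    qed
  qed
  have inGG: "mkG V A B C f n \<in> GG" for A B C by (rule dag[rule_format, OF mkG_DAG[OF inj bd]])
  have t0: "({}, {}, {}) \<in> triples V" by (simp add: triples_def)
  have c0: "cond_indep P M {} {} {}" by (rule CI_triv[OF d]) simp_all
  obtain G0 where G0: "G0 \<in> GG" "pearl_minimal V GG M P G0"
    using exists_min[OF fin inGG Jsub[OF t0 c0]] by blast
  have "J_graph V G0 = J_dist V M P"
  proof
    show "J_graph V G0 \<subseteq> J_dist V M P" using G0 by (simp add: pearl_minimal_def)
    show "J_dist V M P \<subseteq> J_graph V G0"
    proof
      fix u assume u: "u \<in> J_dist V M P"
      obtain X Y S where u': "u = (X,Y,S)" by (cases u) auto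
      have tu: "(X,Y,S) \<in> triples V" and cu: "cond_indep P M X Y S" using u u' by (auto simp: J_dist_def)
      show "u \<in> J_graph V G0"
      proof (cases "X = {} \<or> Y = {}")
        case True then show ?thesis using sep_triv[OF True] tu u' by (simp add: J_graph_def)
      next
        case False
        obtain G1 where G1: "G1 \<in> GG" "J_graph V (mkG V X Y S f n) \<subseteq> J_graph V G1" "pearl_minimal V GG M P G1"
          using exists_min[OF fin inGG Jsub[OF tu cu]] by blast
        have "(X,Y,S) \<in> J_graph V (mkG V X Y S f n)" using sep_main[OF inj bd tu] tu by (simp add: J_graph_def)
        then have "(X,Y,S) \<in> J_graph V G1" using G1 by blast
        moreover have "markov_equivalent V G0 G1" using U G0 G1 unfolding unique_pearl_minimal_def by blast
        ultimately show ?thesis using u' by (simp add: markov_equivalent_def)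
      qed
    qed
  qed
  then show "\<exists>G \<in> GG. faithful V M P G" using G0 by (auto simp: faithful_def)
next
  assume "\<exists>G \<in> GG. faithful V M P G"
  then obtain G where G: "G \<in> GG" "J_graph V G = J_dist V M P" by (auto simp: faithful_def)
  have eq: "J_graph V G1 = J_graph V G" if m: "pearl_minimal V GG M P G1" for G1
  proof -
    have s: "J_graph V G1 \<subseteq> J_graph V G" using m G by (simp add: pearl_minimal_def)
    show ?thesis
    proof (rule ccontr)
      assume "J_graph V G1 \<noteq> J_graph V G"
      then have "J_graph V G1 \<subset> J_graph V G" using s by blast
      then show False using m G unfolding pearl_minimal_def by blast
    qed
  qed
  show "unique_pearl_minimal V GG M P"
    unfolding unique_pearl_minimal_def markov_equivalent_def
  proof (intro ballI impI)
    fix G1 G2 assume "pearl_minimal V GG M P G1 \<and> pearl_minimal V GG M P G2"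
    then show "J_graph V G1 = J_graph V G2" using eq by simp
  qed
qed

end
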